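(* In $\mathrm{HMF}(\mathbb{C}^2,\Gamma_W,W)$ the objects $K_{x,1},\dots,K_{x,p-1}$ are exceptional (the graded endomorphisms of each are just the scalar multiples of the identity, in degree $0$) and pairwise orthogonal (all graded morphisms between distinct ones vanish).
   Context: Let $p,q\ge2$ be integers and $W=x^py+xy^q$. Let $L$ be the abelian group generated by $\vec x,\vec y,\vec c$ modulo $p\vec x+\vec y=\vec x+q\vec y=\vec c$; $S=\mathbb{C}[x,y]$ is $L$-graded with $\deg x=\vec x$, $\deg y=\vec y$, and $R=S/(W)$; $M(l)_k=M_{k+l}$. $\mathrm{HMF}(\mathbb{C}^2,\Gamma_W,W)$ is the homotopy (cohomology) category of $L$-graded matrix factorisations of $W$, equivalent to $D^b(\mathrm{gr}R)/\mathrm{Perf}(\mathrm{gr}R)$; a finitely generated $L$-graded $R$-module is identified with the corresponding object (its stabilisation). Graded morphisms mean $\mathrm{Hom}^n(X,Y)=\mathrm{Hom}(X,Y[n])$ for all $n\in\mathbb{Z}$. $K_x=R/(x)$ and $K_{x,i}=K_x((i+1-p)\vec x)$ for $1\le i\le p-1$. *)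

theory Defs
  imports "HOL-Computational_Algebra.Polynomial"
begin

text \<open>Polynomials in C[x,y] are represented as complex poly poly: the outer variable is y,
  the inner variable is x, so the coefficient of x^i y^j of f is coeff (coeff f j) i.\<close>

type_synonym spoly = "complex poly poly"

definition Xp :: spoly where "Xp = [:[:0, 1:]:]"
definition Yp :: spoly where "Yp = [:0, 1:]"

definition W :: "nat \<Rightarrow> nat \<Rightarrow> spoly" where
  "W p q = Xp ^ p * Yp + Xp * Yp ^ q"

text \<open>Elements of the grading group L are represented by integer triples (a,b,c) meaning
  a x + b y + c c, modulo the relations p x + y - c = 0 and x + q y - c = 0.\<close>

type_synonym lvec = "int \<times> int \<times> int"

fun Lrel :: "nat \<Rightarrow> nat \<Rightarrow> lvec \<Rightarrow> lvec \<Rightarrow> bool" where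
  "Lrel p q (a, b, c) (a', b', c') =
     (\<exists>m n :: int. a - a' = m * int p + n \<and> b - b' = m + n * int q \<and> c - c' = - m - n)"

fun lplus :: "lvec \<Rightarrow> lvec \<Rightarrow> lvec" where
  "lplus (a, b, c) (a', b', c') = (a + a', b + b', c + c')"

fun lminus :: "lvec \<Rightarrow> lvec \<Rightarrow> lvec" where
  "lminus (a, b, c) (a', b', c') = (a - a', b - b', c - c')"

fun lsmul :: "int \<Rightarrow> lvec \<Rightarrow> lvec" where
  "lsmul k (a, b, c) = (k * a, k * b, k * c)"

definition vx :: lvec where "vx = (1, 0, 0)"
definition vy :: lvec where "vy = (0, 1, 0)"
definition vc :: lvec where "vc = (0, 0, 1)"

definition homog :: "nat \<Rightarrow> nat \<Rightarrow> spoly \<Rightarrow> lvec \<Rightarrow> bool" where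
  "homog p q f d \<longleftrightarrow> (\<forall>i j. coeff (coeff f j) i \<noteq> 0 \<longrightarrow> Lrel p q (int i, int j, 0) d)"

text \<open>Rank-one L-graded matrix factorisation  F0 = S(a0) --d0--> F1 = S(a1) --d1--> F0(c) = S(a0+c),
  where M(l)_k = M_(k+l); the S-linear degree-0 maps S(a) -> S(b) are multiplication by
  homogeneous polynomials of degree b - a.\<close>

datatype mf1 = MF1 (deg0: lvec) (deg1: lvec) (d0: spoly) (d1: spoly)

definition is_mf :: "nat \<Rightarrow> nat \<Rightarrow> mf1 \<Rightarrow> bool" where
  "is_mf p q X \<longleftrightarrow>
     homog p q (d0 X) (lminus (deg1 X) (deg0 X)) \<and>
     homog p q (d1 X) (lminus (lplus (deg0 X) vc) (deg1 X)) \<and>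
     d1 X * d0 X = W p q"

definition is_mor :: "nat \<Rightarrow> nat \<Rightarrow> mf1 \<Rightarrow> mf1 \<Rightarrow> spoly \<Rightarrow> spoly \<Rightarrow> bool" where
  "is_mor p q X Y \<phi>0 \<phi>1 \<longleftrightarrow>
     homog p q \<phi>0 (lminus (deg0 Y) (deg0 X)) \<and>
     homog p q \<phi>1 (lminus (deg1 Y) (deg1 X)) \<and>
     d0 Y * \<phi>0 = \<phi>1 * d0 X \<and> d1 Y * \<phi>1 = \<phi>0 * d1 X"

text \<open>Null-homotopic morphisms: h0 : F0 -> G1(-c), h1 : F1 -> G0.\<close>
definition null_htp :: "nat \<Rightarrow> nat \<Rightarrow> mf1 \<Rightarrow> mf1 \<Rightarrow> spoly \<Rightarrow> spoly \<Rightarrow> bool" where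
  "null_htp p q X Y \<phi>0 \<phi>1 \<longleftrightarrow>
     (\<exists>h0 h1. homog p q h0 (lminus (lminus (deg1 Y) vc) (deg0 X)) \<and>
              homog p q h1 (lminus (deg0 Y) (deg1 X)) \<and>
              \<phi>0 = h1 * d0 X + d1 Y * h0 \<and> \<phi>1 = d0 Y * h1 + h0 * d1 X)"

text \<open>Twist (l) and shift [1]; [2] = (c).\<close>
definition twist :: "mf1 \<Rightarrow> lvec \<Rightarrow> mf1" where
  "twist X l = MF1 (lplus (deg0 X) l) (lplus (deg1 X) l) (d0 X) (d1 X)"

definition shift1 :: "mf1 \<Rightarrow> mf1" where
  "shift1 X = MF1 (deg1 X) (lplus (deg0 X) vc) (- d1 X) (- d0 X)"

definition shiftn :: "mf1 \<Rightarrow> int \<Rightarrow> mf1" where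
  "shiftn X n = (if even n then twist X (lsmul (n div 2) vc)
                 else twist (shift1 X) (lsmul (n div 2) vc))"

text \<open>Hom^n(X,Y) = Hom(X, Y[n]) in HMF vanishes.\<close>
definition hom_zero :: "nat \<Rightarrow> nat \<Rightarrow> mf1 \<Rightarrow> mf1 \<Rightarrow> int \<Rightarrow> bool" where
  "hom_zero p q X Y n \<longleftrightarrow>
     (\<forall>\<phi>0 \<phi>1. is_mor p q X (shiftn Y n) \<phi>0 \<phi>1 \<longrightarrow> null_htp p q X (shiftn Y n) \<phi>0 \<phi>1)"

definition exceptional :: "nat \<Rightarrow> nat \<Rightarrow> mf1 \<Rightarrow> bool" where
  "exceptional p q X \<longleftrightarrow>
     (\<forall>\<phi>0 \<phi>1. is_mor p q X X \<phi>0 \<phi>1 \<longrightarrow>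
        (\<exists>t::complex. null_htp p q X X (\<phi>0 - [:[:t:]:]) (\<phi>1 - [:[:t:]:]))) \<and>
     \<not> null_htp p q X X 1 1 \<and>
     (\<forall>n. n \<noteq> 0 \<longrightarrow> hom_zero p q X X n)"

text \<open>K_x = R/(x), stabilised: the matrix factorisation S(-x) --x--> S --W/x--> S(c - x).\<close>
definition Kx :: "nat \<Rightarrow> nat \<Rightarrow> mf1" where
  "Kx p q = MF1 (lminus (0, 0, 0) vx) (0, 0, 0) Xp (Xp ^ (p - 1) * Yp + Yp ^ q)"

definition Kxi :: "nat \<Rightarrow> nat \<Rightarrow> nat \<Rightarrow> mf1" where
  "Kxi p q i = twist (Kx p q) (lsmul (int i + 1 - int p) vx)"

end

theory Submission
  imports Defs
begin

definition cf :: "spoly \<Rightarrow> nat \<Rightarrow> nat \<Rightarrow> complex" where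
  "cf f i j = coeff (coeff f j) i"

lemma cf_ext: "(\<And>i j. cf f i j = cf g i j) \<Longrightarrow> f = g"
  unfolding cf_def by (simp add: poly_eq_iff)

lemma cf_add[simp]: "cf (f + g) i j = cf f i j + cf g i j"
  by (simp add: cf_def)
lemma cf_diff[simp]: "cf (f - g) i j = cf f i j - cf g i j"
  by (simp add: cf_def)
lemma cf_uminus[simp]: "cf (- f) i j = - cf f i j"
  by (simp add: cf_def)
lemma cf_0[simp]: "cf 0 i j = 0"
  by (simp add: cf_def)
lemma cf_1[simp]: "cf 1 i j = (if i = 0 \<and> j = 0 then 1 else 0)"
  by (simp add: cf_def)
lemma cf_const[simp]: "cf [:[:t:]:] i j = (if i = 0 \<and> j = 0 then t else 0)"
  by (simp add: cf_def coeff_pCons')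

lemma cf_Xp[simp]: "cf (Xp * f) i j = (if i = 0 then 0 else cf f (i - 1) j)"
  by (simp add: cf_def Xp_def coeff_pCons')

lemma cf_Yp[simp]: "cf (Yp * f) i j = (if j = 0 then 0 else cf f i (j - 1))"
  by (simp add: cf_def Yp_def coeff_pCons')

lemma cf_Xpow[simp]: "cf (Xp ^ k * f) i j = (if k \<le> i then cf f (i - k) j else 0)"
proof (induction k arbitrary: i)
  case 0 then show ?case by simp
next
  case (Suc k) then show ?case by (auto simp add: mult.assoc)
qed

lemma cf_Ypow[simp]: "cf (Yp ^ k * f) i j = (if k \<le> j then cf f i (j - k) else 0)"
proof (induction k arbitrary: j)
  case 0 then show ?case by simp
next
  case (Suc k) then show ?case by (auto simp add: mult.assoc)
qed

lemma cf_Yp1[simp]: "cf Yp i j = (if i = 0 \<and> j = 1 then 1 else 0)"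
  using cf_Yp[of 1 i j] by auto
lemma cf_Ypow1[simp]: "cf (Yp ^ k) i j = (if i = 0 \<and> j = k then 1 else 0)"
  using cf_Ypow[of k 1 i j] by auto
lemma cf_Xp': "cf (f * Xp) i j = (if i = 0 then 0 else cf f (i - 1) j)"
  by (metis cf_Xp mult.commute)

definition Dx :: "spoly \<Rightarrow> spoly" where "Dx f = map_poly (poly_shift 1) f"
definition Bp :: "spoly \<Rightarrow> spoly" where "Bp f = map_poly (\<lambda>c. [:coeff c 0:]) f"

lemma cf_Dx[simp]: "cf (Dx f) i j = cf f (Suc i) j"
  by (simp add: cf_def Dx_def coeff_map_poly coeff_poly_shift)
lemma cf_Bp[simp]: "cf (Bp f) i j = (if i = 0 then cf f 0 j else 0)"
  by (simp add: cf_def Bp_def coeff_map_poly coeff_pCons')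
lemma cf_shift[simp]: "cf (poly_shift k f) i j = cf f i (j + k)"
  by (simp add: cf_def coeff_poly_shift)

lemma homog_cf: "homog p q f d \<longleftrightarrow> (\<forall>i j. cf f i j \<noteq> 0 \<longrightarrow> Lrel p q (int i, int j, 0) d)"
  by (simp add: homog_def cf_def)


lemma deg_lemma:
  assumes p: "p \<ge> 2" and q: "q \<ge> 1" and d1: "-(int p - 2) \<le> d" and d2: "d \<le> int p - 2"
    and b: "b < q" and L: "Lrel p q (0, int b, 0) (d, 0, m)"
  shows "d = 0 \<and> m = 0 \<and> b = 0"
proof -
  obtain M N where e1: "0 - d = M * int p + N" and e2: "int b - 0 = M + N * int q"
    and e3: "0 - m = - M - N" using L by auto
  have bq: "int b = M - d * int q - M * (int p * int q)"
  proof -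
    have N: "N = - d - M * int p" using e1 by linarith
    have "int b = M + (- d - M * int p) * int q" using e2 N by simp
    then show ?thesis by (simp add: algebra_simps)
  qed
  have pq: "int p * int q \<ge> 2" using p q
  proof -
    have "int p * int q \<ge> 2 * 1" using p q by (intro mult_mono) auto
    then show ?thesis by simp
  qed
  have bl: "int b < int q" using b by simp
  consider "M = 0" | "M \<ge> 1" | "M \<le> -1" by linarith
  then show ?thesis
  proof cases
    case 1
    have b2: "int b = - d * int q" using bq 1 by simp
    have "d = 0"
    proof (rule ccontr)
      assume "d \<noteq> 0"
      then consider "d \<ge> 1" | "d \<le> -1" by linarith
      then show False
      proof cases
        case 1
        have "d * int q \<ge> 1 * int q" using 1 by (intro mult_right_mono) auto
        moreover have "int q \<ge> 1" using q by simp
        ultimately show ?thesis using b2 by linarith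
      next
        case 2
        have "(-d) * int q \<ge> 1 * int q" using 2 by (intro mult_right_mono) auto
        then show ?thesis using b2 bl by simp
      qed
    qed
    then show ?thesis using b2 e1 e3 1 by simp
  next
    case 2
    have h1: "0 \<le> (M - 1) * (int p * int q - 1)" using 2 pq by (intro mult_nonneg_nonneg) auto
    have h2: "0 \<le> (d + int p - 2) * int q" using d1 by (intro mult_nonneg_nonneg) auto
    have "int b \<le> 1 - 2 * int q" using bq h1 h2 by (simp add: algebra_simps)
    then show ?thesis using q by simp
  next
    case 3
    have h1: "0 \<le> (- 1 - M) * (int p * int q - 1)" using 3 pq by (intro mult_nonneg_nonneg) auto
    have h2: "0 \<le> (int p - 2 - d) * int q" using d2 by (intro mult_nonneg_nonneg) auto
    have "int b \<ge> 2 * int q - 1" using bq h1 h2 by (simp add: algebra_simps)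
    then show ?thesis using q bl by simp
  qed
qed


definition d1p :: "nat \<Rightarrow> nat \<Rightarrow> spoly" where "d1p p q = Xp ^ (p - 1) * Yp + Yp ^ q"

lemma d1p_mult: "d1p p q * h = Xp ^ (p - 1) * (Yp * h) + Yp ^ q * h"
  by (simp add: d1p_def algebra_simps)
lemma mult_d1p: "h * d1p p q = Xp ^ (p - 1) * (Yp * h) + Yp ^ q * h"
  by (simp add: d1p_def algebra_simps)

lemma Lrel_h0:
  assumes "Lrel p q (0, int (j + q), 0) (d, 0, m)"
  shows "Lrel p q (0, int j, 0) (d + 1, 0, m - 1)"
proof -
  obtain M N where "0 - d = M * int p + N" "int (j + q) - 0 = M + N * int q" "0 - m = - M - N"
    using assms by auto
  then show ?thesis by (simp, intro exI[of _ M] exI[of _ "N - 1"]) (simp add: algebra_simps)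
qed

lemma Lrel_h1a:
  assumes "Lrel p q (int (Suc i), int j, 0) (d, 0, m)"
  shows "Lrel p q (int i, int j, 0) (d - 1, 0, m)"
proof -
  obtain M N where "int (Suc i) - d = M * int p + N" "int j - 0 = M + N * int q" "0 - m = - M - N"
    using assms by auto
  then show ?thesis by (simp, intro exI[of _ M] exI[of _ "N"]) (simp add: algebra_simps)
qed

lemma Lrel_h1b:
  assumes "Lrel p q (0, int (j + q), 0) (d, 0, m)" and "p \<ge> 2"
  shows "Lrel p q (int (p - 2), int (Suc j), 0) (d - 1, 0, m)"
proof -
  obtain M N where "0 - d = M * int p + N" "int (j + q) - 0 = M + N * int q" "0 - m = - M - N"
    using assms by auto
  then show ?thesis using assms(2) by (simp add: of_nat_diff, intro exI[of _ "M + 1"] exI[of _ "N - 1"]) (simp add: algebra_simps)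
qed

lemma even_core:
  assumes p: "p \<ge> 2" and hom: "homog p q phi (d, 0, m)" and z: "\<forall>b<q. cf phi 0 b = 0"
  shows "\<exists>h0 h1. homog p q h0 (d + 1, 0, m - 1) \<and> homog p q h1 (d - 1, 0, m) \<and>
           phi = h1 * Xp + d1p p q * h0"
proof -
  define h0 where "h0 = poly_shift q (Bp phi)"
  define h1 where "h1 = Dx phi - Xp ^ (p - 2) * (Yp * h0)"
  have c0: "cf h0 i j = (if i = 0 then cf phi 0 (j + q) else 0)" for i j
    by (simp add: h0_def)
  have hp: "cf phi i j \<noteq> 0 \<Longrightarrow> Lrel p q (int i, int j, 0) (d, 0, m)" for i j
    using hom by (simp add: homog_cf)
  have H0: "homog p q h0 (d + 1, 0, m - 1)"
    unfolding homog_cf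
  proof (intro allI impI)
    fix i j assume "cf h0 i j \<noteq> 0"
    then have "i = 0" "cf phi 0 (j + q) \<noteq> 0" by (auto simp: c0 split: if_splits)
    then show "Lrel p q (int i, int j, 0) (d + 1, 0, m - 1)" using hp[of 0 "j + q"] Lrel_h0[of p q j d m] by simp
  qed
  have H1: "homog p q h1 (d - 1, 0, m)"
    unfolding homog_cf
  proof (intro allI impI)
    fix i j assume nz: "cf h1 i j \<noteq> 0"
    show "Lrel p q (int i, int j, 0) (d - 1, 0, m)"
    proof (cases "cf phi (Suc i) j \<noteq> 0")
      case True then show ?thesis using hp Lrel_h1a by blast
    next
      case False
      then have "cf (Xp ^ (p - 2) * (Yp * h0)) i j \<noteq> 0" using nz by (simp add: h1_def)
      then have "p - 2 \<le> i" "j \<noteq> 0" "cf h0 (i - (p - 2)) (j - 1) \<noteq> 0"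
        by (auto split: if_splits)
      then have e: "i = p - 2" "cf phi 0 (j - 1 + q) \<noteq> 0" by (auto simp: c0 split: if_splits)
      have "Lrel p q (int (p - 2), int (Suc (j - 1)), 0) (d - 1, 0, m)"
      proof -
        have "Lrel p q (0, int (j - 1 + q), 0) (d, 0, m)" using hp[OF e(2)] by simp
        then show ?thesis using Lrel_h1b[OF _ p] by blast
      qed
      then show ?thesis using e(1) \<open>j \<noteq> 0\<close> by simp
    qed
  qed
  have pp: "Xp * Xp ^ (p - 2) = Xp ^ (p - 1)"
  proof -
    have "p - 1 = Suc (p - 2)" using p by simp
    then show ?thesis by simp
  qed
  have alg: "h1 * Xp + d1p p q * h0 = Xp * Dx phi + Yp ^ q * h0"
  proof -
    have "h1 * Xp + d1p p q * h0 = Xp * Dx phi - (Xp * Xp ^ (p - 2)) * (Yp * h0) + Xp ^ (p - 1) * (Yp * h0) + Yp ^ q * h0"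
      unfolding h1_def d1p_def by (simp add: algebra_simps)
    then show ?thesis using pp by simp
  qed
  have EQ: "phi = h1 * Xp + d1p p q * h0"
    unfolding alg
  proof (rule cf_ext)
    fix i j
    show "cf phi i j = cf (Xp * Dx phi + Yp ^ q * h0) i j"
      using z by (cases i) (auto simp: c0 not_le)
  qed
  show ?thesis using H0 H1 EQ by blast
qed


lemma Xp_nz: "Xp \<noteq> 0" by (simp add: Xp_def)

lemma homog_zero: "homog p q 0 d" by (simp add: homog_cf)

lemma even_null:
  assumes p: "p \<ge> 2" and hom: "homog p q phi (lminus B0 A0)" and e1: "phi1 = phi"
    and D0: "lminus B0 A0 = (d, 0, m)" and D1: "lminus (lminus B1 vc) A0 = (d + 1, 0, m - 1)"
    and D2: "lminus B0 A1 = (d - 1, 0, m)" and z: "\<forall>b<q. cf phi 0 b = 0"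
  shows "null_htp p q (MF1 A0 A1 Xp (d1p p q)) (MF1 B0 B1 Xp (d1p p q)) phi phi1"
proof -
  obtain h0 h1 where "homog p q h0 (d + 1, 0, m - 1)" "homog p q h1 (d - 1, 0, m)"
    "phi = h1 * Xp + d1p p q * h0"
    using even_core[OF p _ z, of d m] hom D0 by auto
  then show ?thesis unfolding null_htp_def using D1 D2 e1
    by (intro exI[of _ h0] exI[of _ h1]) (simp add: algebra_simps)
qed

lemma odd_null:
  assumes p: "p \<ge> 2" and mor: "is_mor p q (MF1 A0 A1 Xp (d1p p q)) (MF1 B0 B1 (- d1p p q) (- Xp)) phi0 phi1"
    and D0: "lminus B0 A0 = (e + 1, 0, m)" and D2: "lminus B0 A1 = (e, 0, m)"
  shows "null_htp p q (MF1 A0 A1 Xp (d1p p q)) (MF1 B0 B1 (- d1p p q) (- Xp)) phi0 phi1"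
proof -
  have hom: "homog p q phi0 (e + 1, 0, m)" and m1: "(- d1p p q) * phi0 = phi1 * Xp"
    and m2: "(- Xp) * phi1 = phi0 * d1p p q"
    using mor D0 by (auto simp: is_mor_def)
  have z: "cf phi0 0 b = 0" for b
  proof -
    have "cf ((- Xp) * phi1) 0 (b + q) = cf (phi0 * d1p p q) 0 (b + q)" using m2 by simp
    then show ?thesis using p by (simp add: mult_d1p)
  qed
  have ph: "phi0 = Xp * Dx phi0"
    by (rule cf_ext) (use z in \<open>auto\<close>)
  have "phi1 * Xp = (- d1p p q * Dx phi0) * Xp"
    using m1 ph by (metis mult.assoc mult.commute)
  then have ph1: "phi1 = - d1p p q * Dx phi0" using Xp_nz mult_right_cancel by blast
  have hD: "homog p q (Dx phi0) (e, 0, m)"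
    unfolding homog_cf
  proof (intro allI impI)
    fix i j assume "cf (Dx phi0) i j \<noteq> 0"
    then have "cf phi0 (Suc i) j \<noteq> 0" by simp
    then have "Lrel p q (int (Suc i), int j, 0) (e + 1, 0, m)" using hom unfolding homog_cf by blast
    from Lrel_h1a[OF this] show "Lrel p q (int i, int j, 0) (e, 0, m)" by simp
  qed
  have q1: "phi0 = Dx phi0 * Xp + (- Xp) * 0" using ph by (simp add: mult.commute)
  have q2: "phi1 = (- d1p p q) * Dx phi0 + 0 * d1p p q" using ph1 by simp
  show ?thesis unfolding null_htp_def
    apply (rule exI[of _ 0], rule exI[of _ "Dx phi0"])
    unfolding mf1.sel D2 using hD homog_zero q1 q2 by blast
qed


lemma Kxi_eq: "Kxi p q i = MF1 (int i - int p, 0, 0) (int i + 1 - int p, 0, 0) Xp (d1p p q)"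
  by (simp add: Kxi_def Kx_def twist_def vx_def d1p_def)

lemma shiftn_even: "even n \<Longrightarrow> shiftn (MF1 (a1, a2, a3) (b1, b2, b3) f g) n =
   MF1 (a1, a2, a3 + n div 2) (b1, b2, b3 + n div 2) f g"
  by (simp add: shiftn_def twist_def vc_def)

lemma shiftn_odd: "odd n \<Longrightarrow> shiftn (MF1 (a1, a2, a3) (b1, b2, b3) f g) n =
   MF1 (b1, b2, b3 + n div 2) (a1, a2, a3 + 1 + n div 2) (- g) (- f)"
  by (simp add: shiftn_def twist_def shift1_def vc_def)

lemma hom_zero_gen:
  assumes p: "p \<ge> 2" and q: "q \<ge> 1" and i: "i \<in> {1..p - 1}" and j: "j \<in> {1..p - 1}"
    and ne: "i \<noteq> j \<or> n \<noteq> 0"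
  shows "hom_zero p q (Kxi p q i) (Kxi p q j) n"
  unfolding hom_zero_def
proof (intro allI impI)
  fix phi0 phi1
  assume mor: "is_mor p q (Kxi p q i) (shiftn (Kxi p q j) n) phi0 phi1"
  define d where "d = int j - int i"
  define m where "m = n div 2"
  show "null_htp p q (Kxi p q i) (shiftn (Kxi p q j) n) phi0 phi1"
  proof (cases "even n")
    case True
    have sh: "shiftn (Kxi p q j) n = MF1 (int j - int p, 0, m) (int j + 1 - int p, 0, m) Xp (d1p p q)"
      unfolding Kxi_eq using shiftn_even[OF True] m_def by simp
    have D0: "lminus (int j - int p, 0, m) (int i - int p, 0, 0) = (d, 0, m)"
      by (simp add: d_def)
    have hom: "homog p q phi0 (d, 0, m)" and e: "Xp * phi0 = phi1 * Xp"
      using mor[unfolded sh, unfolded Kxi_eq] unfolding is_mor_def mf1.sel D0 by auto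
    have e1: "phi1 = phi0" using e Xp_nz by (metis mult.commute mult_right_cancel)
    have z: "\<forall>b<q. cf phi0 0 b = 0"
    proof (intro allI impI, rule ccontr)
      fix b assume b: "b < q" and nz: "cf phi0 0 b \<noteq> 0"
      have L: "Lrel p q (0, int b, 0) (d, 0, m)" using hom nz unfolding homog_cf by fastforce
      have "d = 0 \<and> m = 0 \<and> b = 0"
        by (rule deg_lemma[OF p q _ _ b L]) (use i j in \<open>auto simp: d_def\<close>)
      then show False using ne True by (auto simp: d_def m_def)
    qed
    show ?thesis unfolding sh unfolding Kxi_eq
      by (rule even_null[OF p _ e1 D0 _ _ z]) (use hom D0 in \<open>auto simp: vc_def d_def\<close>)
  next
    case False
    have sh: "shiftn (Kxi p q j) n = MF1 (int j + 1 - int p, 0, m) (int j - int p, 0, 1 + m) (- d1p p q) (- Xp)"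
      unfolding Kxi_eq using shiftn_odd[OF False] m_def by simp
    show ?thesis unfolding sh unfolding Kxi_eq
      by (rule odd_null[OF p, where e = d and m = m]) (use mor[unfolded sh, unfolded Kxi_eq] in \<open>auto simp: d_def\<close>)
  qed
qed


lemma Kxi_mf:
  assumes p: "p \<ge> 2" and q: "q \<ge> 1"
  shows "is_mf p q (Kxi p q i)"
proof -
  have h1: "homog p q Xp (1, 0, 0)"
  proof -
    have "cf Xp a b \<noteq> 0 \<Longrightarrow> a = 1 \<and> b = 0" for a b
      using cf_Xp[of 1 a b] by (auto split: if_splits)
    then show ?thesis unfolding homog_cf by (fastforce intro!: exI[of _ 0])
  qed
  have h2: "homog p q (d1p p q) (-1, 0, 1)"
    unfolding homog_cf
  proof (intro allI impI)
    fix a b assume "cf (d1p p q) a b \<noteq> 0"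
    then have "(a = p - 1 \<and> b = 1) \<or> (a = 0 \<and> b = q)"
      by (auto simp: d1p_def split: if_splits)
    then show "Lrel p q (int a, int b, 0) (-1, 0, 1)"
    proof
      assume "a = p - 1 \<and> b = 1"
      then show ?thesis using p by (simp add: of_nat_diff) (intro exI[of _ 1] exI[of _ 0], simp)
    next
      assume "a = 0 \<and> b = q"
      then show ?thesis by simp (intro exI[of _ 0] exI[of _ 1], simp)
    qed
  qed
  have W: "d1p p q * Xp = W p q"
  proof -
    have "Xp ^ (p - 1) * Xp = Xp ^ p" using p by (metis Suc_diff_1 le_less_trans less_2_cases_iff power_Suc2 zero_less_one not_less order.strict_trans1)
    then show ?thesis unfolding d1p_def W_def by (simp add: algebra_simps)
  qed
  show ?thesis unfolding is_mf_def Kxi_eq using h1 h2 W by (simp add: vc_def)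
qed

lemma Kxi_exc:
  assumes p: "p \<ge> 2" and q: "q \<ge> 1" and i: "i \<in> {1..p - 1}"
  shows "exceptional p q (Kxi p q i)"
  unfolding exceptional_def
proof (intro conjI allI impI)
  fix n :: int assume "n \<noteq> 0"
  then show "hom_zero p q (Kxi p q i) (Kxi p q i) n" using hom_zero_gen[OF p q i i] by simp
next
  show "\<not> null_htp p q (Kxi p q i) (Kxi p q i) 1 1"
  proof
    assume "null_htp p q (Kxi p q i) (Kxi p q i) 1 1"
    then obtain h0 h1 where "1 = h1 * Xp + d1p p q * h0"
      unfolding null_htp_def Kxi_eq by auto
    then have "cf 1 0 0 = cf (h1 * Xp + (Xp ^ (p - 1) * (Yp * h0) + Yp ^ q * h0)) 0 0"
      by (simp only: d1p_mult)
    then show False using p q by (simp add: cf_Xp')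
  qed
next
  fix phi0 phi1 assume mor: "is_mor p q (Kxi p q i) (Kxi p q i) phi0 phi1"
  define t where "t = cf phi0 0 0"
  define psi where "psi = phi0 - [:[:t:]:]"
  have D0: "lminus (int i - int p, 0, 0) (int i - int p, 0, 0) = (0, 0, 0)" by simp
  have hom: "homog p q phi0 (0, 0, 0)" and e: "Xp * phi0 = phi1 * Xp"
    using mor unfolding Kxi_eq is_mor_def mf1.sel D0 by auto
  have e1: "phi1 = phi0" using e Xp_nz by (metis mult.commute mult_right_cancel)
  have homp: "homog p q psi (0, 0, 0)"
    unfolding homog_cf
  proof (intro allI impI)
    fix a b assume "cf psi a b \<noteq> 0"
    then have "cf phi0 a b \<noteq> 0" by (auto simp: psi_def t_def split: if_splits)
    then show "Lrel p q (int a, int b, 0) (0, 0, 0)" using hom unfolding homog_cf by blast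
  qed
  have z: "\<forall>b<q. cf psi 0 b = 0"
  proof (intro allI impI, rule ccontr)
    fix b assume b: "b < q" and nz: "cf psi 0 b \<noteq> 0"
    then have "b \<noteq> 0" by (auto simp: psi_def t_def split: if_splits)
    have L: "Lrel p q (0, int b, 0) (0, 0, 0)" using homp nz unfolding homog_cf by fastforce
    have "(0::int) = 0 \<and> (0::int) = 0 \<and> b = 0"
      by (rule deg_lemma[OF p q _ _ b L]) (use p in auto)
    then show False using \<open>b \<noteq> 0\<close> by simp
  qed
  have "null_htp p q (MF1 (int i - int p, 0, 0) (int i + 1 - int p, 0, 0) Xp (d1p p q))
      (MF1 (int i - int p, 0, 0) (int i + 1 - int p, 0, 0) Xp (d1p p q)) psi (phi1 - [:[:t:]:])"
    by (rule even_null[OF p _ _ D0 _ _ z]) (use homp e1 in \<open>auto simp: vc_def psi_def\<close>)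
  then show "\<exists>t. null_htp p q (Kxi p q i) (Kxi p q i) (phi0 - [:[:t:]:]) (phi1 - [:[:t:]:])"
    unfolding Kxi_eq psi_def by blast
qed

theorem lemma2p4:
  fixes p q :: nat
  assumes "p \<ge> 2" and "q \<ge> 2"
  shows "(\<forall>i \<in> {1..p - 1}. is_mf p q (Kxi p q i) \<and> exceptional p q (Kxi p q i)) \<and>
         (\<forall>i \<in> {1..p - 1}. \<forall>j \<in> {1..p - 1}. i \<noteq> j \<longrightarrow>
            (\<forall>n::int. hom_zero p q (Kxi p q i) (Kxi p q j) n))"
proof -
  have q: "q \<ge> 1" using assms by simp
  show ?thesis using Kxi_mf[OF assms(1) q] Kxi_exc[OF assms(1) q] hom_zero_gen[OF assms(1) q]
    by blast
qed

end
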